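(* Let $B$ be an $A$-algebra which is an integral domain, and let $f:A\to B$ be an additive group homomorphism. Then for every positive integer $d$ and every $c\in A(d)$, $$M_d(f)(z+c)-M_d(f)(z)=M_d(1)\,f(c)\quad\text{in } B[z].$$
   Context: $q$ is a power of a prime, $A=\mathbb{F}_q[\theta]$, $A_+(d)$ is the set of monic polynomials in $A$ of degree $d$, and for $d\ge1$, $A(d)$ is the $\mathbb{F}_q$-vector space of polynomials in $A$ of degree $<d$. For a function $f:A\to B$ and $d\ge0$, the Carlitz approximation is $M_d(f)(z):=\sum_{b\in A_+(d)} f(b)\prod_{a\in A_+(d)\setminus\{b\}}(z-a)\in B[z]$. $M_d(1)$ denotes $M_d$ applied to the constant function $1$; it is a constant (equal to the image of $(-1)^dD_d/L_d$, where $D_d$ is the product of all monic polynomials of degree $d$ and $L_d$ the least common multiple of all polynomials of degree $d$). *)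

theory Defs
  imports "HOL-Computational_Algebra.Polynomial"
begin

text \<open>A = F_q[theta] is rendered as the type 'k poly for a finite field 'k.
  A_+(d): monic polynomials of degree d.\<close>
definition monics :: "nat \<Rightarrow> 'k::{field,finite} poly set" where
  "monics d = {p. lead_coeff p = 1 \<and> degree p = d}"

text \<open>Carlitz approximation M_d(f) in B[z]; the A-algebra structure of B is the
  ring homomorphism phi, through which elements a of A are viewed in B.\<close>
definition carlitz_approx ::
  "('k::{field,finite} poly \<Rightarrow> 'b::comm_ring_1) \<Rightarrow> ('k poly \<Rightarrow> 'b) \<Rightarrow> nat \<Rightarrow> 'b poly" where
  "carlitz_approx phi f d =
     (\<Sum>b\<in>monics d. smult (f b) (\<Prod>a\<in>monics d - {b}. [:- phi a, 1:]))"

end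

theory Submission
  imports Defs
begin

lemma monics_shift:
  fixes c :: "'k::{field,finite} poly"
  assumes "degree c < d" "a \<in> monics d"
  shows "a + c \<in> monics d"
proof -
  have "degree c < degree a" using assms by (simp add: monics_def)
  then show ?thesis using assms
    by (auto simp add: monics_def degree_add_eq_left coeff_eq_0)
qed

lemma bij_shift:
  fixes c :: "'k::{field,finite} poly"
  assumes "degree c < d"
  shows "bij_betw (\<lambda>a. a + c) (monics d) (monics d)"
proof (rule bij_betw_byWitness[where f'="\<lambda>a. a - c"])
  have dm: "degree (-c) < d" using assms by simp
  show "\<forall>a\<in>monics d. a + c - c = a" by simp
  show "\<forall>a\<in>monics d. a - c + c = a" by simp
  show "(\<lambda>a. a + c) ` monics d \<subseteq> monics d" using monics_shift[OF assms] by auto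
  show "(\<lambda>a. a - c) ` monics d \<subseteq> monics d" using monics_shift[OF dm] by auto
qed

lemma smult_sum_right: "smult a (\<Sum>i\<in>S. g i) = (\<Sum>i\<in>S. smult a (g i))"
  by (induction S rule: infinite_finite_induct) (simp_all add: smult_add_right)

theorem theorem4p1p9:
  fixes phi :: "'k::{field,finite} poly \<Rightarrow> 'b::idom"
    and f :: "'k poly \<Rightarrow> 'b"
    and d :: nat and c :: "'k poly"
  assumes phi_one: "phi 1 = 1"
    and phi_add: "\<And>x y. phi (x + y) = phi x + phi y"
    and phi_mult: "\<And>x y. phi (x * y) = phi x * phi y"
    and f_add: "\<And>x y. f (x + y) = f x + f y"
    and d_pos: "d \<ge> 1"
    and c_deg: "degree c < d"
  shows "pcompose (carlitz_approx phi f d) [:phi c, 1:] - carlitz_approx phi f d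
           = carlitz_approx phi (\<lambda>_. 1) d * [:f c:]"
proof -
  define S :: "'k poly set" where "S = monics d"
  define P where "P b = (\<Prod>a\<in>S - {b}. [:- phi a, 1:])" for b
  have bij: "bij_betw (\<lambda>a. a + c) S S" using bij_shift[OF c_deg] by (simp add: S_def)
  have phisub: "phi (a - c) = phi a - phi c" for a
    using phi_add[of "a - c" c] by simp
  have inner: "(\<Prod>a\<in>S - {b}. [:phi c - phi a, 1:]) = P (b - c)" if "b \<in> S" for b
  proof -
    have bj: "bij_betw (\<lambda>a. a + c) (S - {b - c}) (S - {b})"
    proof -
      have "S - {b} = (\<lambda>a. a + c) ` S - (\<lambda>a. a + c) ` {b - c}"
        using bij by (simp add: bij_betw_def)
      also have "\<dots> = (\<lambda>a. a + c) ` (S - {b - c})"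
        by (rule image_set_diff[symmetric]) (simp add: inj_on_def)
      finally show ?thesis using bij
        by (simp add: bij_betw_def inj_on_def)
    qed
    have "P (b - c) = (\<Prod>a\<in>S - {b - c}. [:- phi ((a + c) - c), 1:])"
      by (simp add: P_def)
    also have "\<dots> = (\<Prod>a\<in>S - {b}. [:- phi (a - c), 1:])"
      using prod.reindex_bij_betw[OF bj, of "\<lambda>a. [:- phi (a - c), 1:]"] by simp
    also have "\<dots> = (\<Prod>a\<in>S - {b}. [:phi c - phi a, 1:])"
      by (simp add: phisub)
    finally show ?thesis by simp
  qed
  have "pcompose (carlitz_approx phi f d) [:phi c, 1:]
      = (\<Sum>b\<in>S. smult (f b) (\<Prod>a\<in>S - {b}. [:phi c - phi a, 1:]))"
    unfolding carlitz_approx_def S_def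
    by (simp add: pcompose_sum pcompose_smult pcompose_prod pcompose_pCons)
  also have "\<dots> = (\<Sum>b\<in>S. smult (f b) (P (b - c)))"
    by (rule sum.cong) (simp_all add: inner)
  also have "\<dots> = (\<Sum>b\<in>S. smult (f (b + c)) (P b))"
    using sum.reindex_bij_betw[OF bij, of "\<lambda>b. smult (f b) (P (b - c))"] by simp
  also have "\<dots> = (\<Sum>b\<in>S. smult (f b) (P b)) + (\<Sum>b\<in>S. P b) * [:f c:]"
    by (simp add: f_add smult_add_left sum.distrib sum_distrib_right mult.commute smult_sum_right)
  finally show ?thesis
    unfolding carlitz_approx_def S_def[symmetric] P_def by simp
qed

end
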